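(* Let $u$ be a convex function on an open convex set $\Omega\subset\mathbb{R}^2$. Then for every $x\in\Omega$, \[ |\partial u(x)| = \int_0^{2\pi}\frac12\left(R_+(x,\theta)^2-R_-(x,\theta)^2\right)^+\,d\theta, \] where \[ R_+(x,\theta)=\inf_{\theta'\in(\theta-\frac\pi2,\theta+\frac\pi2)}\frac{(\partial_{\theta'}u(x))^+}{\cos(\theta-\theta')},\qquad R_-(x,\theta)=\sup_{\theta'\in(\theta-\frac\pi2,\theta+\frac\pi2)}\frac{(-\partial_{\theta'+\pi}u(x))^+}{\cos(\theta-\theta')}. \]
   Context: $|\cdot|$ denotes Lebesgue measure on $\mathbb{R}^2$; $\partial u(x)=\{p\in\mathbb{R}^2: u(z)\ge u(x)+p\cdot(z-x)\ \forall z\in\Omega\}$ is the subgradient. For $\theta\in\mathbb{R}$, $e_\theta=(\cos\theta,\sin\theta)$ and $\partial_\theta u(x)=\lim_{r\to0^+}\frac{u(x+re_\theta)-u(x)}{r}$ is the one-sided directional derivative. For real $a$, $a^+=\max\{a,0\}$. *)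

theory Defs
  imports "HOL-Analysis.Analysis"
begin

definition evec :: "real \<Rightarrow> real^2" where
  "evec \<theta> = vector [cos \<theta>, sin \<theta>]"

definition subgrad :: "(real^2 \<Rightarrow> real) \<Rightarrow> (real^2) set \<Rightarrow> real^2 \<Rightarrow> (real^2) set" where
  "subgrad u \<Omega> x = {p. \<forall>z\<in>\<Omega>. u z \<ge> u x + p \<bullet> (z - x)}"

definition dirderiv :: "(real^2 \<Rightarrow> real) \<Rightarrow> real^2 \<Rightarrow> real \<Rightarrow> real" where
  "dirderiv u x \<theta> = Lim (at_right 0) (\<lambda>r. (u (x + r *\<^sub>R evec \<theta>) - u x) / r)"

text \<open>R_+ (a finite nonnegative infimum) and R_- (supremum, possibly +infinity), in ereal.\<close>
definition Rplus :: "(real^2 \<Rightarrow> real) \<Rightarrow> real^2 \<Rightarrow> real \<Rightarrow> ereal" where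
  "Rplus u x \<theta> = (INF \<theta>'\<in>{\<theta> - pi/2 <..< \<theta> + pi/2}.
      ereal (max (dirderiv u x \<theta>') 0 / cos (\<theta> - \<theta>')))"

definition Rminus :: "(real^2 \<Rightarrow> real) \<Rightarrow> real^2 \<Rightarrow> real \<Rightarrow> ereal" where
  "Rminus u x \<theta> = (SUP \<theta>'\<in>{\<theta> - pi/2 <..< \<theta> + pi/2}.
      ereal (max (- dirderiv u x (\<theta>' + pi)) 0 / cos (\<theta> - \<theta>')))"

end

theory Submission
  imports Defs
begin


definition T2 :: "real \<times> real \<Rightarrow> real^2" where
  "T2 p = fst p *\<^sub>R axis 1 1 + snd p *\<^sub>R axis 2 1"

lemma T2_comp [simp]: "T2 p $ 1 = fst p" "T2 p $ 2 = snd p"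
  by (auto simp: T2_def axis_def)

lemma T2_vector: "T2 (a,b) = vector [a,b]"
  by (simp add: vec_eq_iff forall_2)

lemma T2_cont: "continuous_on UNIV T2"
  unfolding T2_def by (intro continuous_intros)

lemma T2_meas[measurable]: "T2 \<in> borel_measurable borel"
  using T2_cont by (rule borel_measurable_continuous_onI)

lemma T2_meas2[measurable]: "T2 \<in> borel_measurable (lborel \<Otimes>\<^sub>M lborel)"
proof -
  have "sets (lborel \<Otimes>\<^sub>M lborel :: (real\<times>real) measure) = sets borel"
    by (subst lborel_prod) simp
  then show ?thesis using T2_meas measurable_cong_sets[of _ borel borel borel] by blast
qed

lemma lborel_vec2: "distr (lborel \<Otimes>\<^sub>M lborel) borel T2 = lborel"
proof (rule lborel_eqI[symmetric])
  fix l u :: "real^2"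
  assume lu: "\<And>b. b \<in> Basis \<Longrightarrow> l \<bullet> b \<le> u \<bullet> b"
  have l1: "l$1 \<le> u$1" and l2: "l$2 \<le> u$2" using lu[of "axis 1 1"] lu[of "axis 2 1"]
    by (auto simp: Basis_vec_def inner_axis)
  have "T2 -` box l u = {l$1<..<u$1} \<times> {l$2<..<u$2}"
    by (auto simp: box_def Basis_vec_def inner_axis forall_2)
  moreover have "box l u \<in> sets borel" by simp
  ultimately have "emeasure (distr (lborel \<Otimes>\<^sub>M lborel) borel T2) (box l u)
     = emeasure (lborel \<Otimes>\<^sub>M lborel) ({l$1<..<u$1} \<times> {l$2<..<u$2})"
    by (subst emeasure_distr) (auto simp: space_pair_measure)
  also have "\<dots> = ennreal (u$1 - l$1) * ennreal (u$2 - l$2)"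
    by (subst lborel.emeasure_pair_measure_Times) (auto simp: l1 l2)
  also have "(\<Prod>b\<in>Basis. (u - l) \<bullet> b) = (u$1 - l$1) * (u$2 - l$2)"
  proof -
    have "(\<Prod>b\<in>Basis. (u - l) \<bullet> b) = (\<Prod>i\<in>UNIV. (u - l) \<bullet> axis i (1::real))"
    proof -
      have B: "(Basis :: (real^2) set) = (\<lambda>i. axis i 1) ` UNIV" by (auto simp: Basis_vec_def)
      have inj: "inj (\<lambda>i::2. axis i (1::real))" by (auto simp: inj_on_def axis_eq_axis)
      show ?thesis by (simp only: B prod.reindex[OF inj] o_def)
    qed
    also have "\<dots> = (u$1 - l$1) * (u$2 - l$2)"
      by (simp add: UNIV_2 inner_axis)
    finally show ?thesis .
  qed
  ultimately show "emeasure (distr (lborel \<Otimes>\<^sub>M lborel) borel T2) (box l u) = ennreal (\<Prod>b\<in>Basis. (u - l) \<bullet> b)"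
    using l1 l2 by (simp add: ennreal_mult)
qed simp

lemma nn_integral_vec2:
  assumes [measurable]: "h \<in> borel_measurable borel"
  shows "(\<integral>\<^sup>+v. h v \<partial>lborel) = (\<integral>\<^sup>+b. (\<integral>\<^sup>+a. h (T2 (a,b)) \<partial>lborel) \<partial>lborel)"
proof -
  have "(\<integral>\<^sup>+v. h v \<partial>lborel) = (\<integral>\<^sup>+v. h v \<partial>distr (lborel \<Otimes>\<^sub>M lborel) borel T2)"
    by (simp add: lborel_vec2)
  also have "\<dots> = (\<integral>\<^sup>+z. h (T2 z) \<partial>(lborel \<Otimes>\<^sub>M lborel))"
    by (subst nn_integral_distr) auto
  also have "\<dots> = (\<integral>\<^sup>+b. (\<integral>\<^sup>+a. h (T2 (a,b)) \<partial>lborel) \<partial>lborel)"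
    by (subst lborel_pair.nn_integral_snd[symmetric]) auto
  finally show ?thesis .
qed



lemma int1d:
  fixes A B :: ereal
  assumes "0 \<le> A" "A < \<infinity>" "0 \<le> B"
  shows "(\<integral>\<^sup>+r. ennreal r * indicator {r. 0<r \<and> ereal r \<le> A \<and> B \<le> ereal r} r \<partial>lborel)
     = e2ennreal (A\<^sup>2 - B\<^sup>2) / 2"
proof -
  obtain a where a: "A = ereal a" "0 \<le> a" using assms by (cases A) auto
  show ?thesis
  proof (cases "B = \<infinity>")
    case True
    then show ?thesis using a by (simp add: zero_ennreal.rep_eq e2ennreal_neg)
  next
    case False
    then obtain b where b: "B = ereal b" "0 \<le> b" using assms by (cases B) auto
    show ?thesis
    proof (cases "b \<le> a")
      case False
      then have "{r. 0<r \<and> ereal r \<le> A \<and> B \<le> ereal r} = {}" using a b by auto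
      moreover have "A\<^sup>2 - B\<^sup>2 \<le> 0" using a b False
        by (simp add: power2_eq_square mult_mono)
      ultimately show ?thesis by (simp add: e2ennreal_neg)
    next
      case True
      have "(\<integral>\<^sup>+r. ennreal r * indicator {r. 0<r \<and> ereal r \<le> A \<and> B \<le> ereal r} r \<partial>lborel)
          = (\<integral>\<^sup>+r. ennreal r * indicator {b..a} r \<partial>lborel)"
        using AE_lborel_singleton[of 0] a b
        by (intro nn_integral_cong_AE) (auto elim!: eventually_mono simp: indicator_def)
      also have "\<dots> = ennreal (a\<^sup>2/2 - b\<^sup>2/2)"
        by (rule nn_integral_FTC_Icc[where F="\<lambda>r. r\<^sup>2/2"])
           (use True b in \<open>auto intro!: derivative_eq_intros\<close>)
      also have "\<dots> = e2ennreal (A\<^sup>2 - B\<^sup>2) / 2"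
      proof -
        have "A\<^sup>2 - B\<^sup>2 = ereal (a\<^sup>2 - b\<^sup>2)" using a b by (simp add: power2_eq_square)
        moreover have "a\<^sup>2 - b\<^sup>2 \<ge> 0" using True b by (simp add: power_mono)
        ultimately show ?thesis
          using divide_ennreal[of "a\<^sup>2 - b\<^sup>2" 2]
          by (simp add: e2ennreal_ereal diff_divide_distrib)
      qed
      finally show ?thesis .
    qed
  qed
qed



lemma evec_alt: "evec t = cos t *\<^sub>R axis 1 1 + sin t *\<^sub>R axis 2 1"
  by (simp add: evec_def vec_eq_iff forall_2 axis_def)

lemma evec_comp[simp]: "evec t $ 1 = cos t" "evec t $ 2 = sin t"
  by (simp_all add: evec_def)

lemma norm2_vec2: "(norm (p::real^2))\<^sup>2 = (p$1)\<^sup>2 + (p$2)\<^sup>2"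
  unfolding power2_norm_eq_inner by (simp add: inner_vec_def sum_2 power2_eq_square)

definition Pol :: "real^2 \<Rightarrow> real^2" where
  "Pol v = (v$1) *\<^sub>R evec (v$2)"

definition Pol' :: "real^2 \<Rightarrow> real^2 \<Rightarrow> real^2" where
  "Pol' v h = (h$1 * cos (v$2) - v$1 * sin (v$2) * h$2) *\<^sub>R axis 1 1
            + (h$1 * sin (v$2) + v$1 * cos (v$2) * h$2) *\<^sub>R axis 2 1"

lemma Pol_alt: "Pol v = (v$1 * cos (v$2)) *\<^sub>R axis 1 1 + (v$1 * sin (v$2)) *\<^sub>R axis 2 1"
  by (simp add: Pol_def evec_alt algebra_simps)

lemma Pol_cont: "continuous_on UNIV Pol"
  unfolding Pol_alt by (intro continuous_intros)

lemma Pol_deriv: "(Pol has_derivative Pol' v) (at v)"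
  unfolding Pol_alt[abs_def] Pol'_def
  by (auto intro!: derivative_eq_intros bounded_linear.has_derivative[OF bounded_linear_vec_nth]
      simp: algebra_simps)

lemma Pol_det: "det (matrix (Pol' v)) = v$1"
proof -
  have "det (matrix (Pol' v)) = v $ 1 * (cos (v $ 2))\<^sup>2 + v $ 1 * (sin (v $ 2))\<^sup>2"
    by (simp add: det_2 matrix_def Pol'_def axis_def algebra_simps flip: power2_eq_square)
  also have "\<dots> = v$1" by (simp flip: distrib_left)
  finally show ?thesis .
qed



lemma Pol_inj: "inj_on Pol {v. 0 < v$1 \<and> 0 < v$2 \<and> v$2 < 2*pi}"
proof (rule inj_onI)
  fix v w assume v: "v \<in> {v. 0 < v$1 \<and> 0 < v$2 \<and> v$2 < 2*pi}" and w: "w \<in> {v. 0 < v$1 \<and> 0 < v$2 \<and> v$2 < 2*pi}"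
    and eq: "Pol v = Pol w"
  have "(norm (Pol v))\<^sup>2 = (v$1)\<^sup>2" for v
    by (simp add: norm2_vec2 Pol_def power_mult_distrib flip: distrib_left)
  from this[of v] this[of w] eq v w have 1: "v$1 = w$1"
    by (simp add: power2_eq_iff)
  with eq v have "cos (v$2) = cos (w$2)" "sin (v$2) = sin (w$2)"
    by (auto simp: Pol_def vec_eq_iff forall_2)
  then obtain n :: int where n: "v$2 = w$2 + 2*pi*n" using sin_cos_eq_iff by metis
  have "n = 0"
  proof -
    have "(2*pi)*(-1) < (2*pi)*n" using n v w by (smt (verit) mem_Collect_eq)
    moreover have "(2*pi)*n < (2*pi)*1" using n v w by (smt (verit) mem_Collect_eq)
    ultimately have "-1 < real_of_int n" "real_of_int n < 1"
      by (simp_all only: mult_less_cancel_left_pos pi_gt_zero zero_less_mult_iff zero_less_numeral simp_thms)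
    then show ?thesis by linarith
  qed
  with n 1 show "v = w" by (simp add: vec_eq_iff forall_2)
qed



lemma angle_not_0: assumes "0 < t" "t < 2*pi" "cos t = 1" shows False
proof -
  from assms(3) obtain n :: int where n: "t = real_of_int n * 2 * pi" unfolding cos_one_2pi_int by blast
  have e: "(2*pi)*n = t" using n by (simp add: algebra_simps)
  have "(2*pi)*0 < (2*pi)*n" using e assms by simp
  moreover have "(2*pi)*n < (2*pi)*1" using e assms by simp
  ultimately have "0 < real_of_int n" "real_of_int n < 1"
    by (simp_all only: mult_less_cancel_left_pos pi_gt_zero zero_less_mult_iff zero_less_numeral simp_thms)
  then have "0 < n" "n < 1" by simp_all
  then show False by presburger
qed

lemma Pol_image:
  "Pol ` {v. 0 < v$1 \<and> 0 < v$2 \<and> v$2 < 2*pi \<and> Pol v \<in> K} = K - {p. p$2 = 0 \<and> 0 \<le> p$1}"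
proof
  show "Pol ` {v. 0 < v$1 \<and> 0 < v$2 \<and> v$2 < 2*pi \<and> Pol v \<in> K} \<subseteq> K - {p. p$2 = 0 \<and> 0 \<le> p$1}"
  proof clarify
    fix v :: "real^2" assume v: "0 < v$1" "0 < v$2" "v$2 < 2*pi" "Pol v \<in> K"
      and p2: "Pol v $ 2 = 0" and p1: "0 \<le> Pol v $ 1"
    have s: "sin (v$2) = 0" using p2 v by (simp add: Pol_def)
    have c: "0 \<le> cos (v$2)" using p1 v by (simp add: Pol_def zero_le_mult_iff)
    have "(cos (v$2))\<^sup>2 = 1" using s sin_cos_squared_add[of "v$2"] by simp
    then have "cos (v$2) = 1" using c by (simp add: power2_eq_1_iff)
    then show False using angle_not_0 v by blast
  qed
next
  show "K - {p. p$2 = 0 \<and> 0 \<le> p$1} \<subseteq> Pol ` {v. 0 < v$1 \<and> 0 < v$2 \<and> v$2 < 2*pi \<and> Pol v \<in> K}"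
  proof
    fix p :: "real^2" assume p: "p \<in> K - {p. p$2 = 0 \<and> 0 \<le> p$1}"
    then have "p \<noteq> 0" by auto
    then have r: "0 < norm p" by simp
    have "(p$1 / norm p)\<^sup>2 + (p$2 / norm p)\<^sup>2 = ((p$1)\<^sup>2 + (p$2)\<^sup>2) / (norm p)\<^sup>2"
      by (simp add: power_divide add_divide_distrib)
    also have "\<dots> = 1" using r by (simp flip: norm2_vec2)
    finally have "(p$1 / norm p)\<^sup>2 + (p$2 / norm p)\<^sup>2 = 1" .
    then obtain t where t: "0 \<le> t" "t < 2*pi" "p$1 / norm p = cos t" "p$2 / norm p = sin t"
      by (rule sincos_total_2pi)
    have c1: "norm p * cos t = p$1" and c2: "norm p * sin t = p$2"
      using t(3,4) r by (simp_all add: field_simps)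
    have eq: "p = Pol (T2 (norm p, t))"
      unfolding Pol_def vec_eq_iff forall_2 using c1 c2 by simp
    have "t \<noteq> 0"
    proof
      assume "t = 0"
      then have "p$2 = 0" "p$1 = norm p" using c1 c2 by auto
      then show False using p by auto
    qed
    show "p \<in> Pol ` {v. 0 < v$1 \<and> 0 < v$2 \<and> v$2 < 2*pi \<and> Pol v \<in> K}"
    proof (rule image_eqI[where f=Pol and x="T2 (norm p, t)"])
      show "p = Pol (T2 (norm p, t))" by (rule eq)
      show "T2 (norm p, t) \<in> {v. 0 < v$1 \<and> 0 < v$2 \<and> v$2 < 2*pi \<and> Pol v \<in> K}"
        using t r p \<open>t \<noteq> 0\<close> by (simp flip: eq)
    qed
  qed
qed



lemma ray_set_borel: "closed K \<Longrightarrow> {r::real. 0 < r \<and> r *\<^sub>R evec b \<in> K} \<in> sets borel"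
proof -
  assume K: "closed K"
  have "{r::real. 0 < r \<and> r *\<^sub>R evec b \<in> K} = {0<..} \<inter> (\<lambda>r. r *\<^sub>R evec b) -` K" by auto
  moreover have "closed ((\<lambda>r::real. r *\<^sub>R evec b) -` K)"
    by (rule continuous_closed_vimage[OF K]) (intro continuous_intros)
  ultimately show ?thesis by (auto intro!: sets.Int borel_closed)
qed

lemma polar:
  fixes K :: "(real^2) set"
  assumes K: "closed K" "bounded K"
  shows "emeasure lebesgue K = (\<integral>\<^sup>+\<theta>. (\<integral>\<^sup>+r. ennreal r * indicator {r. 0 < r \<and> r *\<^sub>R evec \<theta> \<in> K} r \<partial>lborel)
            * indicator {0<..<2*pi} \<theta> \<partial>lborel)"
proof -
  define S where "S = {v::real^2. 0 < v$1 \<and> 0 < v$2 \<and> v$2 < 2*pi \<and> Pol v \<in> K}"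
  define L where "L = {p::real^2. p$2 = 0 \<and> 0 \<le> p$1}"
  have Kborel[measurable]: "K \<in> sets borel" using K(1) by (rule borel_closed)
  have PS: "Pol ` S = K - L" unfolding S_def L_def by (rule Pol_image)
  have Sb[measurable]: "S \<in> sets borel"
  proof -
    have "S = {v. 0 < v$1 \<and> 0 < v$2 \<and> v$2 < 2*pi} \<inter> Pol -` K" unfolding S_def by auto
    moreover have "open {v::real^2. 0 < v$1 \<and> 0 < v$2 \<and> v$2 < 2*pi}"
      by (intro open_Collect_conj open_Collect_less continuous_intros)
    moreover have "closed (Pol -` K)"
      by (rule continuous_closed_vimage[OF K(1)])
         (use Pol_cont continuous_on_eq_continuous_at in blast)
    ultimately show ?thesis by (auto intro!: sets.Int borel_closed borel_open)
  qed
  have Sl: "S \<in> sets lebesgue" using Sb by simp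
  have Lnull: "L \<in> null_sets lebesgue"
  proof -
    have "negligible {p::real^2. axis 2 1 \<bullet> p = 0}"
      by (rule negligible_hyperplane) (simp add: axis_eq_0_iff)
    moreover have "L \<subseteq> {p::real^2. axis 2 1 \<bullet> p = 0}" by (auto simp: L_def inner_axis')
    ultimately have "negligible L" by (rule negligible_subset)
    then show ?thesis by (simp add: negligible_iff_null_sets)
  qed
  have Kc: "compact K" using K by (simp add: compact_eq_bounded_closed)
  have Kl: "K \<in> sets lebesgue" using lmeasurable_compact[OF Kc] by (simp add: fmeasurable_def)
  have KL: "K - L \<in> lmeasurable"
    using Kl Lnull K(2) by (intro bounded_set_imp_lmeasurable) (auto intro: bounded_subset)
  have "emeasure lebesgue K = emeasure lebesgue (K - L)"
    by (rule emeasure_Diff_null_set[symmetric, OF Lnull Kl])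
  also have "\<dots> = ennreal (measure lebesgue (K - L))"
    by (rule emeasure_eq_measure2[OF KL])
  also have "\<dots> = (\<integral>\<^sup>+v. ennreal (indicator S v * \<bar>v$1\<bar>) \<partial>lborel)"
  proof -
    have der: "\<And>v. v \<in> S \<Longrightarrow> (Pol has_derivative Pol' v) (at v within S)"
      using Pol_deriv has_derivative_at_withinI by blast
    have inj: "inj_on Pol S" by (rule inj_on_subset[OF Pol_inj]) (auto simp: S_def)
    have "Pol ` S \<in> lmeasurable \<and> measure lebesgue (Pol ` S) = measure lebesgue (K - L)"
      using KL PS by simp
    then have "((\<lambda>v. \<bar>det (matrix (Pol' v))\<bar>) has_integral measure lebesgue (K - L)) S"
      using has_measure_differentiable_image[OF Sl der inj] by blast
    then have "((\<lambda>v. \<bar>v$1\<bar>) has_integral measure lebesgue (K - L)) S"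
      by (simp add: Pol_det)
    from nn_integral_has_integral_lebesgue[OF _ this] show ?thesis by simp
  qed
  also have "\<dots> = (\<integral>\<^sup>+b. (\<integral>\<^sup>+a. ennreal (indicator S (T2 (a,b)) * \<bar>T2 (a,b) $ 1\<bar>) \<partial>lborel) \<partial>lborel)"
    by (rule nn_integral_vec2) measurable
  also have "\<dots> = (\<integral>\<^sup>+\<theta>. (\<integral>\<^sup>+r. ennreal r * indicator {r. 0 < r \<and> r *\<^sub>R evec \<theta> \<in> K} r \<partial>lborel)
            * indicator {0<..<2*pi} \<theta> \<partial>lborel)"
  proof (rule nn_integral_cong)
    fix b :: real
    have "(\<integral>\<^sup>+a. ennreal (indicator S (T2 (a,b)) * \<bar>T2 (a,b) $ 1\<bar>) \<partial>lborel)
       = (\<integral>\<^sup>+r. ennreal r * indicator {r. 0 < r \<and> r *\<^sub>R evec b \<in> K} r * indicator {0<..<2*pi} b \<partial>lborel)"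
      by (intro nn_integral_cong) (auto simp: S_def Pol_def indicator_def)
    also have "\<dots> = (\<integral>\<^sup>+r. ennreal r * indicator {r. 0 < r \<and> r *\<^sub>R evec b \<in> K} r \<partial>lborel) * indicator {0<..<2*pi} b"
      using ray_set_borel[OF K(1), of b]
      by (intro nn_integral_multc) measurable
    finally show "(\<integral>\<^sup>+a. ennreal (indicator S (T2 (a,b)) * \<bar>T2 (a,b) $ 1\<bar>) \<partial>lborel)
       = (\<integral>\<^sup>+r. ennreal r * indicator {r. 0 < r \<and> r *\<^sub>R evec b \<in> K} r \<partial>lborel) * indicator {0<..<2*pi} b" .
  qed
  finally show ?thesis .
qed



lemma norm_evec[simp]: "norm (evec t) = 1"
proof -
  have "(norm (evec t))\<^sup>2 = 1" by (simp add: norm2_vec2)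
  then show ?thesis using norm_ge_zero[of "evec t"] by (simp add: power2_eq_1_iff)
qed

lemma inner_evec: "evec a \<bullet> evec b = cos (a - b)"
  by (simp add: inner_vec_def sum_2 cos_diff)

lemma inner_evec': "p \<bullet> evec b = p$1 * cos b + p$2 * sin b"
  by (simp add: inner_vec_def sum_2)

lemma polar_decomp: assumes "v \<noteq> (0::real^2)" obtains t where "v = norm v *\<^sub>R evec t"
proof -
  have r: "0 < norm v" using assms by simp
  have "(v$1 / norm v)\<^sup>2 + (v$2 / norm v)\<^sup>2 = ((v$1)\<^sup>2 + (v$2)\<^sup>2) / (norm v)\<^sup>2"
    by (simp add: power_divide add_divide_distrib)
  also have "\<dots> = 1" using r by (simp flip: norm2_vec2)
  finally have "(v$1 / norm v)\<^sup>2 + (v$2 / norm v)\<^sup>2 = 1" .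
  then obtain t where t: "v$1 / norm v = cos t" "v$2 / norm v = sin t"
    by (rule sincos_total_2pi)
  have c1: "norm v * cos t = v$1" and c2: "norm v * sin t = v$2"
    using t r by (simp_all add: field_simps)
  have "v = norm v *\<^sub>R evec t"
    unfolding vec_eq_iff forall_2 using c1 c2 by simp
  then show ?thesis by (rule that)
qed

lemma evec_periodic: "evec (a + 2*pi*real_of_int n) = evec a"
proof -
  have "sin (a + 2*pi*real_of_int n) = sin a \<and> cos (a + 2*pi*real_of_int n) = cos a"
    using sin_cos_eq_iff by blast
  then show ?thesis by (simp add: evec_def)
qed

context
  fixes u :: "real^2 \<Rightarrow> real" and \<Omega> :: "(real^2) set" and x :: "real^2"
  assumes op: "open \<Omega>" and cvx: "convex \<Omega>" and cu: "convex_on \<Omega> u" and xO: "x \<in> \<Omega>"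
begin

lemma q_mono:
  assumes r: "0 < r" "r \<le> s" and s: "x + s *\<^sub>R e \<in> \<Omega>"
  shows "(u (x + r *\<^sub>R e) - u x) / r \<le> (u (x + s *\<^sub>R e) - u x) / s"
proof -
  have s0: "0 < s" using r by linarith
  have eq: "(1 - r/s) *\<^sub>R x + (r/s) *\<^sub>R (x + s *\<^sub>R e) = x + r *\<^sub>R e"
    using s0 by (simp add: algebra_simps)
  have "u (x + r *\<^sub>R e) \<le> (1 - r/s) * u x + (r/s) * u (x + s *\<^sub>R e)"
    using convex_onD[OF cu, of "r/s" x "x + s *\<^sub>R e"] xO s r s0 by (simp add: eq)
  then have "u (x + r *\<^sub>R e) - u x \<le> r * ((u (x + s *\<^sub>R e) - u x) / s)"
    using s0 by (simp add: field_simps)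
  then show ?thesis using r by (simp add: pos_divide_le_eq mult.commute)
qed

lemma q_lower:
  assumes r: "0 < r" "0 < t" and O: "x + r *\<^sub>R e \<in> \<Omega>" "x - t *\<^sub>R e \<in> \<Omega>"
  shows "(u x - u (x - t *\<^sub>R e)) / t \<le> (u (x + r *\<^sub>R e) - u x) / r"
proof -
  define l where "l = t / (r + t)"
  have l: "0 \<le> l" "l \<le> 1" using r by (auto simp: l_def)
  have eq: "(1 - l) *\<^sub>R (x - t *\<^sub>R e) + l *\<^sub>R (x + r *\<^sub>R e) = x"
  proof -
    have "(1 - l) * t = l * r" using r by (simp add: l_def field_simps)
    have "(1 - l) *\<^sub>R (x - t *\<^sub>R e) + l *\<^sub>R (x + r *\<^sub>R e) = x + (l * r - (1 - l) * t) *\<^sub>R e"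
      by (simp add: algebra_simps)
    also have "\<dots> = x" using \<open>(1 - l) * t = l * r\<close> by simp
    finally show ?thesis .
  qed
  have "u x \<le> (1 - l) * u (x - t *\<^sub>R e) + l * u (x + r *\<^sub>R e)"
    using convex_onD[OF cu, of l "x - t *\<^sub>R e" "x + r *\<^sub>R e"] l O by (simp add: eq)
  moreover have "1 - l = r / (r + t)" using r by (simp add: l_def field_simps)
  ultimately have "u x \<le> (r * u (x - t *\<^sub>R e) + t * u (x + r *\<^sub>R e)) / (r + t)"
    by (simp add: l_def add_divide_distrib)
  then have "(r + t) * u x \<le> r * u (x - t *\<^sub>R e) + t * u (x + r *\<^sub>R e)"
    using r by (simp add: pos_le_divide_eq mult.commute)
  then have "r * (u x - u (x - t *\<^sub>R e)) \<le> t * (u (x + r *\<^sub>R e) - u x)"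
    by (simp add: algebra_simps)
  then show ?thesis using r by (simp add: divide_simps mult.commute)
qed

end


context
  fixes u :: "real^2 \<Rightarrow> real" and \<Omega> :: "(real^2) set" and x :: "real^2"
  assumes op: "open \<Omega>" and cvx: "convex \<Omega>" and cu: "convex_on \<Omega> u" and xO: "x \<in> \<Omega>"
begin

lemma dd_tendsto:
  "((\<lambda>r. (u (x + r *\<^sub>R evec \<theta>) - u x) / r) \<longlongrightarrow> dirderiv u x \<theta>) (at_right 0)"
proof -
  obtain \<delta> where \<delta>: "0 < \<delta>" "ball x \<delta> \<subseteq> \<Omega>" using op xO openE by blast
  define Q where "Q r = (u (x + r *\<^sub>R evec \<theta>) - u x) / r" for r
  have inO: "x + r *\<^sub>R evec \<theta> \<in> \<Omega>" if "\<bar>r\<bar> < \<delta>" for r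
    using \<delta> that by (auto simp: dist_norm)
  have xm: "x - (\<delta>/2) *\<^sub>R evec \<theta> \<in> \<Omega>"
    using inO[of "-(\<delta>/2)"] \<delta> by simp
  define c where "c = (u x - u (x - (\<delta>/2) *\<^sub>R evec \<theta>)) / (\<delta>/2)"
  have lb: "c \<le> Q r" if "0 < r" "r < \<delta>" for r
    unfolding c_def Q_def
    by (rule q_lower[OF op cvx cu xO]) (use that \<delta> inO xm in auto)
  have bdd: "bdd_below (Q ` {0<..<\<delta>})" using lb by (auto intro!: bdd_belowI[of _ c])
  have ne: "{0<..<\<delta>} \<noteq> {}" using \<delta> by auto
  define D where "D = Inf (Q ` {0<..<\<delta>})"
  have "(Q \<longlongrightarrow> D) (at_right 0)"
  proof (rule order_tendstoI)
    fix a assume "a < D"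
    then have "a < Q r" if "0 < r" "r < \<delta>" for r
      using cInf_lower[OF _ bdd, of "Q r"] that unfolding D_def by fastforce
    then show "eventually (\<lambda>r. a < Q r) (at_right 0)"
      unfolding eventually_at_right_field using \<delta> by blast
  next
    fix a assume "D < a"
    then obtain r0 where r0: "0 < r0" "r0 < \<delta>" "Q r0 < a"
      using cInf_less_iff[OF _ bdd, of a] ne unfolding D_def by auto
    have "Q r < a" if "0 < r" "r < r0" for r
      using q_mono[OF op cvx cu xO, of r r0 "evec \<theta>"] that r0 inO[of r0] unfolding Q_def by auto
    then show "eventually (\<lambda>r. Q r < a) (at_right 0)"
      unfolding eventually_at_right_field using r0 by blast
  qed
  moreover have "dirderiv u x \<theta> = D"
    unfolding dirderiv_def using calculation unfolding Q_def by (rule tendsto_Lim[rotated]) simp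
  ultimately show ?thesis unfolding Q_def by simp
qed

lemma dd_upper:
  assumes "0 < s" "x + s *\<^sub>R evec \<theta> \<in> \<Omega>"
  shows "dirderiv u x \<theta> \<le> (u (x + s *\<^sub>R evec \<theta>) - u x) / s"
proof (rule tendsto_upperbound[OF dd_tendsto])
  show "eventually (\<lambda>r. (u (x + r *\<^sub>R evec \<theta>) - u x) / r \<le> (u (x + s *\<^sub>R evec \<theta>) - u x) / s) (at_right 0)"
    unfolding eventually_at_right_field
    using q_mono[OF op cvx cu xO] assms by (intro exI[of _ s]) auto
qed simp

lemma dd_lower:
  assumes "p \<in> subgrad u \<Omega> x"
  shows "p \<bullet> evec \<theta> \<le> dirderiv u x \<theta>"
proof (rule tendsto_lowerbound[OF dd_tendsto])
  obtain \<delta> where \<delta>: "0 < \<delta>" "ball x \<delta> \<subseteq> \<Omega>" using op xO openE by blast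
  have "p \<bullet> evec \<theta> \<le> (u (x + r *\<^sub>R evec \<theta>) - u x) / r" if "0 < r" "r < \<delta>" for r
  proof -
    have "x + r *\<^sub>R evec \<theta> \<in> \<Omega>" using \<delta> that by (auto simp: dist_norm)
    then have "u (x + r *\<^sub>R evec \<theta>) \<ge> u x + p \<bullet> (r *\<^sub>R evec \<theta>)"
      using assms by (auto simp: subgrad_def)
    then show ?thesis using that by (simp add: pos_le_divide_eq mult.commute)
  qed
  then show "eventually (\<lambda>r. p \<bullet> evec \<theta> \<le> (u (x + r *\<^sub>R evec \<theta>) - u x) / r) (at_right 0)"
    unfolding eventually_at_right_field using \<delta> by blast
qed simp

lemma subgrad_char: "subgrad u \<Omega> x = {p. \<forall>\<theta>. p \<bullet> evec \<theta> \<le> dirderiv u x \<theta>}"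
proof
  show "subgrad u \<Omega> x \<subseteq> {p. \<forall>\<theta>. p \<bullet> evec \<theta> \<le> dirderiv u x \<theta>}"
    using dd_lower by blast
next
  show "{p. \<forall>\<theta>. p \<bullet> evec \<theta> \<le> dirderiv u x \<theta>} \<subseteq> subgrad u \<Omega> x"
  proof (clarsimp simp: subgrad_def)
    fix p z assume p: "\<forall>\<theta>. p \<bullet> evec \<theta> \<le> dirderiv u x \<theta>" and z: "z \<in> \<Omega>"
    show "u x + p \<bullet> (z - x) \<le> u z"
    proof (cases "z = x")
      case False
      then have nz: "z - x \<noteq> 0" by simp
      obtain t where t: "z - x = norm (z - x) *\<^sub>R evec t" using polar_decomp[OF nz] by blast
      define s where "s = norm (z - x)"
      have s: "0 < s" using nz by (simp add: s_def)
      have zz: "x + s *\<^sub>R evec t = z" using t by (simp add: s_def algebra_simps)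
      have "p \<bullet> (z - x) = s * (p \<bullet> evec t)" using arg_cong[OF t, of "\<lambda>v. p \<bullet> v"] by (simp add: s_def)
      also have "\<dots> \<le> s * dirderiv u x t" using p s by simp
      also have "\<dots> \<le> s * ((u z - u x) / s)"
        using dd_upper[of s t] s zz z by (intro mult_left_mono) auto
      also have "\<dots> = u z - u x" using s by simp
      finally show ?thesis by simp
    qed simp
  qed
qed

lemma dd_usc:
  assumes "dirderiv u x \<theta>0 < 0"
  shows "\<exists>\<epsilon>>0. \<forall>\<theta>. \<bar>\<theta> - \<theta>0\<bar> < \<epsilon> \<longrightarrow> dirderiv u x \<theta> < 0"
proof -
  obtain \<delta> where \<delta>: "0 < \<delta>" "ball x \<delta> \<subseteq> \<Omega>" using op xO openE by blast
  have inO: "x + r *\<^sub>R evec t \<in> \<Omega>" if "0 \<le> r" "r < \<delta>" for r t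
    using \<delta> that by (auto simp: dist_norm)
  have "eventually (\<lambda>r. (u (x + r *\<^sub>R evec \<theta>0) - u x) / r < 0) (at_right 0)"
    using order_tendstoD(2)[OF dd_tendsto assms] .
  then obtain b where b: "0 < b" "\<And>r. 0 < r \<Longrightarrow> r < b \<Longrightarrow> (u (x + r *\<^sub>R evec \<theta>0) - u x) / r < 0"
    unfolding eventually_at_right_field by auto
  define r where "r = min b \<delta> / 2"
  have r: "0 < r" "r < b" "r < \<delta>" using b \<delta> by (auto simp: r_def)
  have neg: "(u (x + r *\<^sub>R evec \<theta>0) - u x) / r < 0" using b r by auto
  have uc: "continuous_on \<Omega> u" by (rule convex_on_continuous[OF op cu])
  have "isCont (\<lambda>t. (u (x + r *\<^sub>R evec t) - u x) / r) \<theta>0"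
  proof -
    have "isCont u (x + r *\<^sub>R evec \<theta>0)"
      using uc op inO[of r \<theta>0] r continuous_on_eq_continuous_at by auto
    moreover have "isCont (\<lambda>t. x + r *\<^sub>R evec t) \<theta>0"
      unfolding evec_alt by (intro continuous_intros)
    ultimately have "isCont (\<lambda>t. u (x + r *\<^sub>R evec t)) \<theta>0"
      using isCont_o2 by blast
    then show ?thesis using r by (intro continuous_intros) auto
  qed
  then have "eventually (\<lambda>t. (u (x + r *\<^sub>R evec t) - u x) / r < 0) (at \<theta>0)"
    using neg unfolding isCont_def by (rule order_tendstoD)
  then obtain \<epsilon> where \<epsilon>: "0 < \<epsilon>" "\<And>t. 0 < dist t \<theta>0 \<Longrightarrow> dist t \<theta>0 < \<epsilon> \<Longrightarrow> (u (x + r *\<^sub>R evec t) - u x) / r < 0"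
    unfolding eventually_at by auto
  have "dirderiv u x t < 0" if "\<bar>t - \<theta>0\<bar> < \<epsilon>" for t
  proof (cases "t = \<theta>0")
    case True then show ?thesis using assms by simp
  next
    case False
    then have "(u (x + r *\<^sub>R evec t) - u x) / r < 0" using \<epsilon> that by (auto simp: dist_real_def)
    moreover have "dirderiv u x t \<le> (u (x + r *\<^sub>R evec t) - u x) / r"
      using dd_upper[of r t] r inO[of r t] by simp
    ultimately show ?thesis by linarith
  qed
  then show ?thesis using \<epsilon> by blast
qed

end


lemma half_cos_pos: "\<phi> \<in> {\<theta> - pi/2 <..< \<theta> + pi/2} \<Longrightarrow> 0 < cos (\<theta> - \<phi>)"
  by (rule cos_gt_zero_pi) auto

lemma cos_shift: "cos (\<theta> - (\<phi> + pi)) = - cos (\<theta> - \<phi>)"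
proof -
  have "\<theta> - (\<phi> + pi) = (\<theta> - \<phi>) - pi" by simp
  then show ?thesis by (simp only: cos_diff) simp
qed

lemma dirderiv_periodic: "dirderiv u x (a + 2*pi*real_of_int n) = dirderiv u x a"
  unfolding dirderiv_def by (simp add: evec_periodic)

context
  fixes u :: "real^2 \<Rightarrow> real" and \<Omega> :: "(real^2) set" and x :: "real^2"
  assumes op: "open \<Omega>" and cvx: "convex \<Omega>" and cu: "convex_on \<Omega> u" and xO: "x \<in> \<Omega>"
begin

lemma ray_sub:
  assumes r: "0 < r" "r *\<^sub>R evec \<theta> \<in> subgrad u \<Omega> x"
  shows "ereal r \<le> Rplus u x \<theta> \<and> Rminus u x \<theta> \<le> ereal r"
proof -
  have H: "r * cos (\<theta> - \<phi>) \<le> dirderiv u x \<phi>" for \<phi>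
    using r(2) subgrad_char[OF op cvx cu xO] by (auto simp: inner_evec)
  have "ereal r \<le> Rplus u x \<theta>"
    unfolding Rplus_def le_INF_iff
  proof (intro ballI)
    fix \<phi> assume \<phi>: "\<phi> \<in> {\<theta> - pi/2 <..< \<theta> + pi/2}"
    have c: "0 < cos (\<theta> - \<phi>)" using half_cos_pos[OF \<phi>] .
    have "r * cos (\<theta> - \<phi>) \<le> max (dirderiv u x \<phi>) 0" using H[of \<phi>] by simp
    then show "ereal r \<le> ereal (max (dirderiv u x \<phi>) 0 / cos (\<theta> - \<phi>))"
      using c by (simp add: pos_le_divide_eq)
  qed
  moreover have "Rminus u x \<theta> \<le> ereal r"
    unfolding Rminus_def SUP_le_iff
  proof (intro ballI)
    fix \<phi> assume \<phi>: "\<phi> \<in> {\<theta> - pi/2 <..< \<theta> + pi/2}"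
    have c: "0 < cos (\<theta> - \<phi>)" using half_cos_pos[OF \<phi>] .
    have "- dirderiv u x (\<phi> + pi) \<le> r * cos (\<theta> - \<phi>)" using H[of "\<phi> + pi"] by (simp add: cos_shift)
    moreover have "0 \<le> r * cos (\<theta> - \<phi>)" using c r by simp
    ultimately have "max (- dirderiv u x (\<phi> + pi)) 0 \<le> r * cos (\<theta> - \<phi>)" by simp
    then show "ereal (max (- dirderiv u x (\<phi> + pi)) 0 / cos (\<theta> - \<phi>)) \<le> ereal r"
      using c by (simp add: pos_divide_le_eq)
  qed
  ultimately show ?thesis by simp
qed

lemma ray_sup:
  assumes r: "0 < r" "ereal r \<le> Rplus u x \<theta>" "Rminus u x \<theta> \<le> ereal r"
  shows "r *\<^sub>R evec \<theta> \<in> subgrad u \<Omega> x"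
proof -
  have P: "r * cos (\<theta> - \<phi>) \<le> dirderiv u x \<phi> \<and> 0 < dirderiv u x \<phi>"
    if \<phi>: "\<phi> \<in> {\<theta> - pi/2 <..< \<theta> + pi/2}" for \<phi>
  proof -
    have c: "0 < cos (\<theta> - \<phi>)" using half_cos_pos[OF \<phi>] .
    have "ereal r \<le> ereal (max (dirderiv u x \<phi>) 0 / cos (\<theta> - \<phi>))"
      using r(2) \<phi> unfolding Rplus_def le_INF_iff by blast
    then have "r * cos (\<theta> - \<phi>) \<le> max (dirderiv u x \<phi>) 0"
      using c by (simp add: pos_le_divide_eq)
    moreover have "0 < r * cos (\<theta> - \<phi>)" using c r by simp
    ultimately show ?thesis by (auto simp: max_def split: if_splits)
  qed
  have M: "- dirderiv u x (\<phi> + pi) \<le> r * cos (\<theta> - \<phi>)"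
    if \<phi>: "\<phi> \<in> {\<theta> - pi/2 <..< \<theta> + pi/2}" for \<phi>
  proof -
    have c: "0 < cos (\<theta> - \<phi>)" using half_cos_pos[OF \<phi>] .
    have "ereal (max (- dirderiv u x (\<phi> + pi)) 0 / cos (\<theta> - \<phi>)) \<le> ereal r"
      using r(3) \<phi> unfolding Rminus_def SUP_le_iff by blast
    then have "max (- dirderiv u x (\<phi> + pi)) 0 \<le> r * cos (\<theta> - \<phi>)"
      using c by (simp add: pos_divide_le_eq)
    then show ?thesis by simp
  qed
  have C1: "0 \<le> dirderiv u x (\<theta> + pi/2)"
  proof (rule ccontr)
    assume "\<not> ?thesis"
    then obtain \<epsilon> where \<epsilon>: "0 < \<epsilon>" "\<And>t. \<bar>t - (\<theta> + pi/2)\<bar> < \<epsilon> \<Longrightarrow> dirderiv u x t < 0"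
      using dd_usc[OF op cvx cu xO, of "\<theta> + pi/2"] by auto
    define m where "m = min \<epsilon> pi"
    have m: "0 < m" "m \<le> \<epsilon>" "m \<le> pi" using \<epsilon> by (auto simp: m_def)
    define \<phi> where "\<phi> = \<theta> + pi/2 - m/2"
    have "\<phi> \<in> {\<theta> - pi/2 <..< \<theta> + pi/2}" using m pi_gt_zero by (auto simp: \<phi>_def)
    moreover have "dirderiv u x \<phi> < 0" using \<epsilon>(2)[of \<phi>] m by (simp add: \<phi>_def)
    ultimately show False using P by fastforce
  qed
  have C2: "0 \<le> dirderiv u x (\<theta> - pi/2)"
  proof (rule ccontr)
    assume "\<not> ?thesis"
    then obtain \<epsilon> where \<epsilon>: "0 < \<epsilon>" "\<And>t. \<bar>t - (\<theta> - pi/2)\<bar> < \<epsilon> \<Longrightarrow> dirderiv u x t < 0"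
      using dd_usc[OF op cvx cu xO, of "\<theta> - pi/2"] by auto
    define m where "m = min \<epsilon> pi"
    have m: "0 < m" "m \<le> \<epsilon>" "m \<le> pi" using \<epsilon> by (auto simp: m_def)
    define \<phi> where "\<phi> = \<theta> - pi/2 + m/2"
    have "\<phi> \<in> {\<theta> - pi/2 <..< \<theta> + pi/2}" using m pi_gt_zero by (auto simp: \<phi>_def)
    moreover have "dirderiv u x \<phi> < 0" using \<epsilon>(2)[of \<phi>] m by (simp add: \<phi>_def)
    ultimately show False using P by fastforce
  qed
  have main: "r * cos (\<theta> - \<psi>) \<le> dirderiv u x \<psi>"
    if \<psi>: "\<theta> - pi/2 \<le> \<psi>" "\<psi> < \<theta> + 3*pi/2" for \<psi>
  proof -
    consider "\<psi> = \<theta> - pi/2" | "\<psi> \<in> {\<theta> - pi/2 <..< \<theta> + pi/2}" | "\<psi> = \<theta> + pi/2"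
      | "\<theta> + pi/2 < \<psi>" using \<psi> by fastforce
    then show ?thesis
    proof cases
      case 1 then show ?thesis using C2 by simp
    next
      case 2 then show ?thesis using P by blast
    next
      case 3 then show ?thesis using C1 by simp
    next
      case 4
      then have "\<psi> - pi \<in> {\<theta> - pi/2 <..< \<theta> + pi/2}" using \<psi> by auto
      from M[OF this] show ?thesis using cos_shift[of \<theta> "\<psi> - pi"] by simp
    qed
  qed
  show ?thesis
    unfolding subgrad_char[OF op cvx cu xO]
  proof (intro CollectI allI)
    fix \<phi>
    define k where "k = \<lfloor>(\<phi> - \<theta> + pi/2) / (2*pi)\<rfloor>"
    define \<psi> where "\<psi> = \<phi> - 2*pi*real_of_int k"
    have k1: "real_of_int k \<le> (\<phi> - \<theta> + pi/2) / (2*pi)" unfolding k_def by linarith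
    have k2: "(\<phi> - \<theta> + pi/2) / (2*pi) < real_of_int k + 1" unfolding k_def by linarith
    have "2*pi*real_of_int k \<le> \<phi> - \<theta> + pi/2" using k1 by (simp add: pos_le_divide_eq mult.commute)
    moreover have "\<phi> - \<theta> + pi/2 < 2*pi*(real_of_int k + 1)" using k2 by (simp add: pos_divide_less_eq mult.commute)
    ultimately have \<psi>: "\<theta> - pi/2 \<le> \<psi>" "\<psi> < \<theta> + 3*pi/2" by (auto simp: \<psi>_def algebra_simps)
    have \<phi>eq: "\<phi> = \<psi> + 2*pi*real_of_int k" by (simp add: \<psi>_def)
    have "(r *\<^sub>R evec \<theta>) \<bullet> evec \<phi> = r * cos (\<theta> - \<psi>)"
      by (simp add: \<phi>eq evec_periodic inner_evec)
    also have "\<dots> \<le> dirderiv u x \<psi>" using main[OF \<psi>] .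
    also have "\<dots> = dirderiv u x \<phi>" by (simp add: \<phi>eq dirderiv_periodic)
    finally show "(r *\<^sub>R evec \<theta>) \<bullet> evec \<phi> \<le> dirderiv u x \<phi>" .
  qed
qed

end


context
  fixes u :: "real^2 \<Rightarrow> real" and \<Omega> :: "(real^2) set" and x :: "real^2"
  assumes op: "open \<Omega>" and cvx: "convex \<Omega>" and cu: "convex_on \<Omega> u" and xO: "x \<in> \<Omega>"
begin

lemma K_closed: "closed (subgrad u \<Omega> x)"
proof -
  have "subgrad u \<Omega> x = (\<Inter>z\<in>\<Omega>. {p. (z - x) \<bullet> p \<le> u z - u x})"
    by (auto simp: subgrad_def inner_commute algebra_simps)
  then show ?thesis by (auto intro!: closed_INT closed_halfspace_le)
qed

lemma K_bounded: "bounded (subgrad u \<Omega> x)"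
proof -
  obtain \<delta> where \<delta>: "0 < \<delta>" "cball x \<delta> \<subseteq> \<Omega>" using op xO open_contains_cball by blast
  have "continuous_on (cball x \<delta>) u"
    using convex_on_continuous[OF op cu] \<delta> continuous_on_subset by blast
  then have "compact (u ` cball x \<delta>)" by (intro compact_continuous_image) auto
  then have "bounded (u ` cball x \<delta>)" by (rule compact_imp_bounded)
  then obtain M where M0: "\<forall>y \<in> u ` cball x \<delta>. norm y \<le> M" unfolding bounded_iff by blast
  then have M: "\<And>z. z \<in> cball x \<delta> \<Longrightarrow> norm (u z) \<le> M" by blast
  have "norm p \<le> 2 * M / \<delta>" if p: "p \<in> subgrad u \<Omega> x" for p
  proof (cases "p = 0")
    case True then show ?thesis using M[of x] \<delta> norm_ge_zero[of "u x"] by simp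
  next
    case False
    define z where "z = x + (\<delta> / norm p) *\<^sub>R p"
    have zc: "z \<in> cball x \<delta>" using False \<delta> by (simp add: z_def dist_norm)
    then have "z \<in> \<Omega>" using \<delta> by auto
    then have "u z \<ge> u x + p \<bullet> (z - x)" using p by (auto simp: subgrad_def)
    moreover have "p \<bullet> (z - x) = \<delta> * norm p"
    proof -
      have "p \<bullet> (z - x) = (\<delta> / norm p) * (p \<bullet> p)" by (simp add: z_def)
      also have "p \<bullet> p = norm p * norm p" by (simp add: dot_square_norm power2_eq_square)
      finally show ?thesis using False by simp
    qed
    ultimately have "\<delta> * norm p \<le> u z - u x" by simp
    also have "\<dots> \<le> 2 * M" using M[OF zc] M[of x] \<delta> by (auto simp: abs_le_iff)
    finally show ?thesis using \<delta> by (simp add: pos_le_divide_eq mult.commute)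
  qed
  then show ?thesis unfolding bounded_iff by blast
qed

lemma Rplus_nonneg: "0 \<le> Rplus u x \<theta>"
  unfolding Rplus_def le_INF_iff
  by (auto intro!: divide_nonneg_pos half_cos_pos)

lemma Rplus_finite: "Rplus u x \<theta> < \<infinity>"
proof -
  have "Rplus u x \<theta> \<le> ereal (max (dirderiv u x \<theta>) 0 / cos (\<theta> - \<theta>))"
    unfolding Rplus_def by (rule INF_lower) auto
  also have "\<dots> < \<infinity>" using ereal_less_PInfty[OF PInfty_neq_ereal(1)] .
  finally show ?thesis .
qed

lemma Rminus_nonneg: "0 \<le> Rminus u x \<theta>"
proof -
  have "ereal (max (- dirderiv u x (\<theta> + pi)) 0 / cos (\<theta> - \<theta>)) \<le> Rminus u x \<theta>"
    unfolding Rminus_def by (rule SUP_upper) auto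
  moreover have "0 \<le> max (- dirderiv u x (\<theta> + pi)) 0 / cos (\<theta> - \<theta>)" by simp
  then have "0 \<le> ereal (max (- dirderiv u x (\<theta> + pi)) 0 / cos (\<theta> - \<theta>))" by (simp only: zero_ereal_def ereal_less_eq)
  ultimately show ?thesis by (rule order.trans[rotated])
qed

lemma ray_eq: "{r. 0 < r \<and> r *\<^sub>R evec \<theta> \<in> subgrad u \<Omega> x}
   = {r. 0 < r \<and> ereal r \<le> Rplus u x \<theta> \<and> Rminus u x \<theta> \<le> ereal r}"
  using ray_sub[OF op cvx cu xO] ray_sup[OF op cvx cu xO] by blast

lemma main:
  "emeasure lebesgue (subgrad u \<Omega> x) =
    (\<integral>\<^sup>+ \<theta>. indicator {0..2*pi} \<theta> *
        e2ennreal ((Rplus u x \<theta>)\<^sup>2 - (Rminus u x \<theta>)\<^sup>2) / 2 \<partial>lborel)"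
proof -
  have "emeasure lebesgue (subgrad u \<Omega> x) = (\<integral>\<^sup>+\<theta>. (\<integral>\<^sup>+r. ennreal r * indicator {r. 0 < r \<and> r *\<^sub>R evec \<theta> \<in> subgrad u \<Omega> x} r \<partial>lborel)
            * indicator {0<..<2*pi} \<theta> \<partial>lborel)"
    by (rule polar[OF K_closed K_bounded])
  also have "\<dots> = (\<integral>\<^sup>+ \<theta>. indicator {0..2*pi} \<theta> *
        e2ennreal ((Rplus u x \<theta>)\<^sup>2 - (Rminus u x \<theta>)\<^sup>2) / 2 \<partial>lborel)"
  proof (rule nn_integral_cong_AE)
    have "AE \<theta> in lborel. \<theta> \<noteq> 0 \<and> \<theta> \<noteq> 2*pi"
      using AE_lborel_singleton[of 0] AE_lborel_singleton[of "2*pi"] by eventually_elim simp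
    then show "AE \<theta> in lborel. (\<integral>\<^sup>+r. ennreal r * indicator {r. 0 < r \<and> r *\<^sub>R evec \<theta> \<in> subgrad u \<Omega> x} r \<partial>lborel)
            * indicator {0<..<2*pi} \<theta> = indicator {0..2*pi} \<theta> *
        e2ennreal ((Rplus u x \<theta>)\<^sup>2 - (Rminus u x \<theta>)\<^sup>2) / 2"
    proof eventually_elim
      fix \<theta> :: real assume \<theta>: "\<theta> \<noteq> 0 \<and> \<theta> \<noteq> 2*pi"
      show "(\<integral>\<^sup>+r. ennreal r * indicator {r. 0 < r \<and> r *\<^sub>R evec \<theta> \<in> subgrad u \<Omega> x} r \<partial>lborel)
            * indicator {0<..<2*pi} \<theta> = indicator {0..2*pi} \<theta> *
        e2ennreal ((Rplus u x \<theta>)\<^sup>2 - (Rminus u x \<theta>)\<^sup>2) / 2"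
      proof (cases "\<theta> \<in> {0<..<2*pi}")
        case True
        then have "\<theta> \<in> {0..2*pi}" by auto
        have "(\<integral>\<^sup>+r. ennreal r * indicator {r. 0 < r \<and> r *\<^sub>R evec \<theta> \<in> subgrad u \<Omega> x} r \<partial>lborel)
          = (\<integral>\<^sup>+r. ennreal r * indicator {r. 0 < r \<and> ereal r \<le> Rplus u x \<theta> \<and> Rminus u x \<theta> \<le> ereal r} r \<partial>lborel)"
          by (simp only: ray_eq)
        also have "\<dots> = e2ennreal ((Rplus u x \<theta>)\<^sup>2 - (Rminus u x \<theta>)\<^sup>2) / 2"
          by (rule int1d[OF Rplus_nonneg Rplus_finite Rminus_nonneg])
        finally have eq: "(\<integral>\<^sup>+r. ennreal r * indicator {r. 0 < r \<and> r *\<^sub>R evec \<theta> \<in> subgrad u \<Omega> x} r \<partial>lborel)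
          = e2ennreal ((Rplus u x \<theta>)\<^sup>2 - (Rminus u x \<theta>)\<^sup>2) / 2" .
        show ?thesis using True \<open>\<theta> \<in> {0..2*pi}\<close> by (simp only: eq indicator_simps mult_1_right mult_1)
      next
        case False
        then have "\<theta> \<notin> {0..2*pi}" using \<theta> by auto
        then show ?thesis using False by simp
      qed
    qed
  qed
  finally show ?thesis .
qed

end


theorem theorem3p8:
  fixes u :: "real^2 \<Rightarrow> real" and \<Omega> :: "(real^2) set"
  assumes "open \<Omega>" and "convex \<Omega>" and "convex_on \<Omega> u" and "x \<in> \<Omega>"
  shows "emeasure lebesgue (subgrad u \<Omega> x) =
    (\<integral>\<^sup>+ \<theta>. indicator {0..2*pi} \<theta> *
        e2ennreal ((Rplus u x \<theta>)\<^sup>2 - (Rminus u x \<theta>)\<^sup>2) / 2 \<partial>lborel)"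
  by (rule main[OF assms])

end
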